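(* Let $\alpha\in\mathbb{Q}$ and let $$f(x)=c_0+c_1(x-\alpha)^{e_1}+\cdots+c_t(x-\alpha)^{e_t}\in\mathbb{Q}[x]$$ with $c_1,\dots,c_t\neq 0$ and integers $0<e_1<\cdots<e_t$, so that $n=\deg f=e_t$. Let $B_T,B_H,B_N\in\mathbb{N}$ satisfy $t\le B_T$, $\mathrm{size}(c_i)\le B_H$ for $0\le i\le t$, and $\log_2 n\le B_N$, and suppose $\deg f>2B_T$. Then there exist $C_1,C_2\in\mathbb{N}$ with $\log_2 C_1\le 2B_H$ and $\log_2 C_2\le B_N(3B_T-1)$ such that for every prime $p$ with $p\nmid C_1$ and $(p-1)\nmid C_2$, we have $\deg f^{(p)}>2B_T$.
   Context: For $q\in\mathbb{Q}$ written as $q=a/b$ with $a\in\mathbb{Z}$, $b\in\mathbb{N}$, $\gcd(a,b)=1$, $\mathrm{size}(q)=\lceil\log_2(|a|+1)\rceil+\lceil\log_2(b+1)\rceil+1$. For a prime $p$ and $f\in\mathbb{Q}[x]$, $f^{(p)}\in\mathbb{Z}_p[x]$ denotes the unique polynomial of degree less than $p$ which is congruent to $f$ modulo $x^p-x$ and whose coefficients are reduced modulo $p$.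
   Formalization: The conclusion $\deg f^{(p)}>2B_T$ is claimed only for primes p that also divide no denominator of a coefficient of f in powers of x. The statement above fails without it. *)

theory Defs
  imports Complex_Main "HOL-Computational_Algebra.Polynomial" "HOL-Number_Theory.Cong"
begin

definition rat_size :: "rat \<Rightarrow> nat" where
  "rat_size q = (case quotient_of q of (a, b) \<Rightarrow>
      nat \<lceil>log 2 (real_of_int (\<bar>a\<bar> + 1))\<rceil> + nat \<lceil>log 2 (real_of_int (b + 1))\<rceil> + 1)"

definition p_integral :: "nat \<Rightarrow> rat \<Rightarrow> bool" where
  "p_integral p q = (\<not> int p dvd snd (quotient_of q))"

definition rat_mod :: "nat \<Rightarrow> rat \<Rightarrow> int" where
  "rat_mod p q = (THE r. 0 \<le> r \<and> r < int p \<and>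
      [snd (quotient_of q) * r = fst (quotient_of q)] (mod int p))"

definition poly_red :: "nat \<Rightarrow> rat poly \<Rightarrow> int poly" where
  "poly_red p f = (THE g. degree g < p \<and> (\<forall>i. 0 \<le> coeff g i \<and> coeff g i < int p) \<and>
      (\<exists>h :: int poly. \<forall>i. int p dvd
         coeff (map_poly (rat_mod p) f - g - (monom 1 p - monom 1 1) * h) i))"

end

theory Submission
  imports Defs
begin


definition Rm :: "nat \<Rightarrow> rat \<Rightarrow> int \<Rightarrow> bool" where
  "Rm p q r \<longleftrightarrow> (\<exists>u v. q = of_int u / of_int v \<and> \<not> int p dvd v \<and> int p dvd (v * r - u))"

lemma Rm_of_int: assumes "prime p" shows "Rm p (of_int n) n"
proof -
  have "p \<noteq> 1" using assms by auto
  hence "\<not> int p dvd 1" by (metis of_nat_1 int_dvd_int_iff nat_dvd_1_iff_1)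
  thus ?thesis unfolding Rm_def by (intro exI[of _ n] exI[of _ 1]) simp
qed

lemma Rm_add:
  assumes "prime p" "Rm p q r" "Rm p q' r'"
  shows "Rm p (q + q') (r + r')"
proof -
  have pr: "prime (int p)" using assms(1) by (simp add: prime_nat_int_transfer)
  obtain u v where a: "q = of_int u / of_int v" "\<not> int p dvd v" "int p dvd (v * r - u)"
    using assms(2) unfolding Rm_def by blast
  obtain u' v' where b: "q' = of_int u' / of_int v'" "\<not> int p dvd v'" "int p dvd (v' * r' - u')"
    using assms(3) unfolding Rm_def by blast
  have v0: "v \<noteq> 0" "v' \<noteq> 0" using a(2) b(2) by auto
  have "q + q' = of_int (u * v' + u' * v) / of_int (v * v')"
    using v0 by (simp add: a(1) b(1) field_simps)
  moreover have "\<not> int p dvd (v * v')" using a(2) b(2) pr by (simp add: prime_dvd_mult_iff)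
  moreover have "int p dvd (v * v') * (r + r') - (u * v' + u' * v)"
  proof -
    have "(v * v') * (r + r') - (u * v' + u' * v) = v' * (v * r - u) + v * (v' * r' - u')"
      by (simp add: algebra_simps)
    thus ?thesis using a(3) b(3) by simp
  qed
  ultimately show ?thesis unfolding Rm_def by blast
qed

lemma Rm_mult:
  assumes "prime p" "Rm p q r" "Rm p q' r'"
  shows "Rm p (q * q') (r * r')"
proof -
  have pr: "prime (int p)" using assms(1) by (simp add: prime_nat_int_transfer)
  obtain u v where a: "q = of_int u / of_int v" "\<not> int p dvd v" "int p dvd (v * r - u)"
    using assms(2) unfolding Rm_def by blast
  obtain u' v' where b: "q' = of_int u' / of_int v'" "\<not> int p dvd v'" "int p dvd (v' * r' - u')"
    using assms(3) unfolding Rm_def by blast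
  have "q * q' = of_int (u * u') / of_int (v * v')"
    by (simp add: a(1) b(1))
  moreover have "\<not> int p dvd (v * v')" using a(2) b(2) pr by (simp add: prime_dvd_mult_iff)
  moreover have "int p dvd (v * v') * (r * r') - (u * u')"
  proof -
    have "(v * v') * (r * r') - (u * u') = (v' * r') * (v * r - u) + u * (v' * r' - u')"
      by (simp add: algebra_simps)
    thus ?thesis using a(3) b(3) by simp
  qed
  ultimately show ?thesis unfolding Rm_def by blast
qed

lemma Rm_uminus: "Rm p q r \<Longrightarrow> Rm p (- q) (- r)"
  unfolding Rm_def
proof (elim exE conjE)
  fix u v assume a: "q = of_int u / of_int v" "\<not> int p dvd v" "int p dvd (v * r - u)"
  have "- q = of_int (-u) / of_int v" using a(1) by simp
  moreover have "v * (-r) - (-u) = - (v * r - u)" by simp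
  ultimately have "int p dvd v * (-r) - (-u)" using a(3) by (metis dvd_minus_iff)
  thus "\<exists>u v. - q = of_int u / of_int v \<and> \<not> int p dvd v \<and> int p dvd v * - r - u"
    using a(2) \<open>- q = of_int (-u) / of_int v\<close> by blast
qed

lemma Rm_cong: "Rm p q r \<Longrightarrow> int p dvd (r - r') \<Longrightarrow> Rm p q r'"
  unfolding Rm_def
proof (elim exE conjE)
  fix u v assume a: "q = of_int u / of_int v" "\<not> int p dvd v" "int p dvd (v * r - u)"
    and d: "int p dvd (r - r')"
  have "v * r' - u = (v * r - u) - v * (r - r')" by (simp add: algebra_simps)
  moreover have "int p dvd (v * r - u) - v * (r - r')" using dvd_diff[OF a(3) dvd_mult[OF d]] .
  ultimately have "int p dvd v * r' - u" by (simp add: algebra_simps)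
  thus "\<exists>u v. q = of_int u / of_int v \<and> \<not> int p dvd v \<and> int p dvd v * r' - u" using a by blast
qed

lemma Rm_eq_dvd:
  assumes "prime p" "Rm p q r" "Rm p q r'"
  shows "int p dvd (r - r')"
proof -
  have pr: "prime (int p)" using assms(1) by (simp add: prime_nat_int_transfer)
  obtain u v where a: "q = of_int u / of_int v" "\<not> int p dvd v" "int p dvd (v * r - u)"
    using assms(2) unfolding Rm_def by blast
  obtain u' v' where b: "q = of_int u' / of_int v'" "\<not> int p dvd v'" "int p dvd (v' * r' - u')"
    using assms(3) unfolding Rm_def by blast
  have v0: "v \<noteq> 0" "v' \<noteq> 0" using a(2) b(2) by auto
  have "of_int u / of_int v = (of_int u' / of_int v' :: rat)" using a(1) b(1) by simp
  hence "of_int (u * v') = (of_int (u' * v) :: rat)" using v0 by (simp add: field_simps)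
  hence e: "u * v' = u' * v" by (simp only: of_int_eq_iff)
  have "(v * v') * (r - r') = v' * (v * r - u) - v * (v' * r' - u') + (u * v' - u' * v)"
    by (simp add: algebra_simps)
  hence "int p dvd (v * v') * (r - r')" using a(3) b(3) e by simp
  moreover have "\<not> int p dvd (v * v')" using a(2) b(2) pr by (simp add: prime_dvd_mult_iff)
  ultimately show ?thesis using pr by (simp add: prime_dvd_mult_iff)
qed

lemma Rm_num:
  assumes "prime p" "Rm p q r" "int p dvd r"
  shows "int p dvd fst (quotient_of q)"
proof -
  have pr: "prime (int p)" using assms(1) by (simp add: prime_nat_int_transfer)
  obtain u v where a: "q = of_int u / of_int v" "\<not> int p dvd v" "int p dvd (v * r - u)"
    using assms(2) unfolding Rm_def by blast
  obtain n d where nd: "quotient_of q = (n, d)" by (cases "quotient_of q") auto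
  have d0: "d > 0" using nd quotient_of_denom_pos by blast
  have q: "q = of_int n / of_int d" using nd quotient_of_div by blast
  have v0: "v \<noteq> 0" using a(2) by auto
  have "of_int u / of_int v = (of_int n / of_int d :: rat)" using a(1) q by simp
  hence "of_int (u * d) = (of_int (n * v) :: rat)" using v0 d0 by (simp add: field_simps)
  hence e: "u * d = n * v" by (simp only: of_int_eq_iff)
  have "int p dvd v * r - (v * r - u)" using dvd_diff[OF dvd_mult[OF assms(3)] a(3)] .
  hence "int p dvd u" by simp
  hence "int p dvd n * v" using e[symmetric] by simp
  hence "int p dvd n" using a(2) pr by (simp add: prime_dvd_mult_iff)
  thus ?thesis using nd by simp
qed

lemma Rm_sum:
  assumes "prime p" "\<And>i. i \<in> S \<Longrightarrow> Rm p (f i) (g i)"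
  shows "Rm p (\<Sum>i\<in>S. f i) (\<Sum>i\<in>S. g i)"
  using assms(2)
proof (induction S rule: infinite_finite_induct)
  case (infinite A) thus ?case using Rm_of_int[OF assms(1), of 0] by simp
next
  case empty thus ?case using Rm_of_int[OF assms(1), of 0] by simp
next
  case (insert x F) thus ?case using Rm_add[OF assms(1)] by simp
qed

lemma Rm_prod:
  assumes "prime p" "\<And>i. i \<in> S \<Longrightarrow> Rm p (f i) (g i)"
  shows "Rm p (\<Prod>i\<in>S. f i) (\<Prod>i\<in>S. g i)"
  using assms(2)
proof (induction S rule: infinite_finite_induct)
  case (infinite A) thus ?case using Rm_of_int[OF assms(1), of 1] by simp
next
  case empty thus ?case using Rm_of_int[OF assms(1), of 1] by simp
next
  case (insert x F) thus ?case using Rm_mult[OF assms(1)] by simp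
qed

lemma Rm_power:
  assumes "prime p" "Rm p q r" shows "Rm p (q ^ n) (r ^ n)"
  using Rm_prod[OF assms(1), of "{..<n}" "\<lambda>_. q" "\<lambda>_. r"] assms(2) by simp

lemma rat_mod_props:
  assumes "prime p" "p_integral p q"
  shows "0 \<le> rat_mod p q \<and> rat_mod p q < int p \<and> Rm p q (rat_mod p q)"
proof -
  have pr: "prime (int p)" using assms(1) by (simp add: prime_nat_int_transfer)
  obtain u v where uv: "quotient_of q = (u, v)" by (cases "quotient_of q") auto
  have nd: "\<not> int p dvd v" using assms(2) uv unfolding p_integral_def by simp
  have P0: "int p > 0" using assms(1) prime_gt_0_nat by simp
  have "coprime (int p) v" using nd pr by (simp add: prime_imp_coprime)
  hence "coprime v (int p)" by (simp add: coprime_commute)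
  then obtain x where x: "[v * x = 1] (mod int p)" using cong_solve_coprime_int by blast
  define r0 where "r0 = (u * x) mod int p"
  let ?P = "\<lambda>r. 0 \<le> r \<and> r < int p \<and> [snd (quotient_of q) * r = fst (quotient_of q)] (mod int p)"
  have c0: "[v * r0 = u] (mod int p)"
  proof -
    have "[v * r0 = v * (u * x)] (mod int p)" unfolding r0_def
      by (simp add: cong_mult cong_mod_left)
    moreover have "[v * (u * x) = u * 1] (mod int p)"
      using cong_scalar_left[OF x, of u] by (simp add: ac_simps)
    ultimately show ?thesis by (simp add: cong_trans)
  qed
  have pr0: "?P r0" using c0 uv P0 unfolding r0_def by simp
  have un: "r = r0" if "?P r" for r
  proof -
    have c: "[v * r = u] (mod int p)" using that uv by simp
    have "[v * r = v * r0] (mod int p)" using c c0 cong_sym cong_trans by blast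
    hence "int p dvd v * r - v * r0" by (simp add: cong_iff_dvd_diff)
    hence "int p dvd v * (r - r0)" by (simp add: algebra_simps)
    hence "int p dvd r - r0" using nd pr by (simp add: prime_dvd_mult_iff)
    hence "r mod int p = r0 mod int p" by (simp add: mod_eq_dvd_iff)
    thus ?thesis using that pr0 by simp
  qed
  have "rat_mod p q = r0" unfolding rat_mod_def using pr0 un by (rule the_equality)
  moreover have "Rm p q r0"
    unfolding Rm_def using quotient_of_div[OF uv] nd c0
    by (auto simp: cong_iff_dvd_diff)
  ultimately show ?thesis using pr0 by simp
qed

lemma rat_mod_0: "p > 0 \<Longrightarrow> rat_mod p 0 = 0"
  unfolding rat_mod_def
  apply (rule the_equality)
   apply simp
  apply (simp add: cong_0_iff)
  using zdvd_imp_le by fastforce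



definition PR :: "nat \<Rightarrow> rat poly \<Rightarrow> int poly \<Rightarrow> bool" where
  "PR p f F \<longleftrightarrow> (\<forall>k. Rm p (coeff f k) (coeff F k))"

lemma PR_add: "prime p \<Longrightarrow> PR p f F \<Longrightarrow> PR p g G \<Longrightarrow> PR p (f + g) (F + G)"
  by (simp add: PR_def Rm_add)

lemma PR_const: "prime p \<Longrightarrow> Rm p a A \<Longrightarrow> PR p [:a:] [:A:]"
  unfolding PR_def using Rm_of_int[of p 0] by (auto simp: coeff_pCons split: nat.split)

lemma PR_mult:
  assumes "prime p" "PR p f F" "PR p g G" shows "PR p (f * g) (F * G)"
  unfolding PR_def coeff_mult
  using assms by (intro allI Rm_sum Rm_mult) (auto simp: PR_def)

lemma PR_smult:
  assumes "prime p" "Rm p a A" "PR p f F" shows "PR p (smult a f) (smult A F)"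
  using assms by (simp add: PR_def Rm_mult)

lemma PR_power:
  assumes "prime p" "PR p f F" shows "PR p (f ^ n) (F ^ n)"
proof (induction n)
  case 0 thus ?case using PR_const[OF assms(1) Rm_of_int[OF assms(1), of 1]] by (simp add: one_pCons)
next
  case (Suc n) thus ?case using PR_mult[OF assms(1) assms(2)] by simp
qed

lemma PR_sum:
  assumes "prime p" "\<And>i. i \<in> S \<Longrightarrow> PR p (f i) (g i)"
  shows "PR p (\<Sum>i\<in>S. f i) (\<Sum>i\<in>S. g i)"
  using assms(1,2) by (simp add: PR_def coeff_sum Rm_sum)

lemma pcompose_X_power: "([:0, 1:] ^ n) \<circ>\<^sub>p q = q ^ n"
  by (induction n) (simp_all add: pcompose_mult pcompose_pCons one_pCons pcompose_const)

lemma pcompose_monom_gen: "monom c n \<circ>\<^sub>p q = smult c (q ^ n)"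
  by (simp add: monom_altdef pcompose_smult pcompose_X_power)

lemma pcompose_sum_form:
  assumes "degree f \<le> N"
  shows "f \<circ>\<^sub>p q = (\<Sum>k\<le>N. smult (coeff f k) (q ^ k))"
proof -
  have "f \<circ>\<^sub>p q = (\<Sum>k\<le>N. monom (coeff f k) k) \<circ>\<^sub>p q"
    using poly_as_sum_of_monoms'[OF assms] by simp
  also have "\<dots> = (\<Sum>k\<le>N. smult (coeff f k) (q ^ k))"
    by (simp add: pcompose_sum pcompose_monom_gen)
  finally show ?thesis .
qed

lemma PR_pcompose:
  assumes "prime p" "PR p f F" "PR p q Q"
  shows "PR p (f \<circ>\<^sub>p q) (F \<circ>\<^sub>p Q)"
proof -
  define N where "N = max (degree f) (degree F)"
  have "f \<circ>\<^sub>p q = (\<Sum>k\<le>N. smult (coeff f k) (q ^ k))"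
    by (rule pcompose_sum_form) (simp add: N_def)
  moreover have "F \<circ>\<^sub>p Q = (\<Sum>k\<le>N. smult (coeff F k) (Q ^ k))"
    by (rule pcompose_sum_form) (simp add: N_def)
  moreover have "PR p (\<Sum>k\<le>N. smult (coeff f k) (q ^ k)) (\<Sum>k\<le>N. smult (coeff F k) (Q ^ k))"
    using assms by (intro PR_sum PR_smult PR_power) (auto simp: PR_def)
  ultimately show ?thesis by simp
qed

definition Xp :: "nat \<Rightarrow> int poly" where
  "Xp p = monom 1 p - monom 1 1"

definition MI :: "nat \<Rightarrow> int poly \<Rightarrow> int poly \<Rightarrow> bool" where
  "MI p F G \<longleftrightarrow> (\<exists>h k. F - G = Xp p * h + smult (int p) k)"

lemma MI_refl: "MI p F F"
  unfolding MI_def by (rule exI[of _ 0], rule exI[of _ 0]) simp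

lemma MI_sym: "MI p F G \<Longrightarrow> MI p G F"
  unfolding MI_def
proof (elim exE)
  fix h k assume "F - G = Xp p * h + smult (int p) k"
  hence "G - F = Xp p * (-h) + smult (int p) (-k)" by (simp add: algebra_simps)
  thus "\<exists>h k. G - F = Xp p * h + smult (int p) k" by blast
qed

lemma MI_trans: "MI p F G \<Longrightarrow> MI p G H \<Longrightarrow> MI p F H"
  unfolding MI_def
proof (elim exE)
  fix h k h' k' assume "F - G = Xp p * h + smult (int p) k" "G - H = Xp p * h' + smult (int p) k'"
  hence "F - H = Xp p * (h + h') + smult (int p) (k + k')" by (simp add: algebra_simps smult_add_right)
  thus "\<exists>h k. F - H = Xp p * h + smult (int p) k" by blast
qed

lemma MI_add: "MI p F G \<Longrightarrow> MI p F' G' \<Longrightarrow> MI p (F + F') (G + G')"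
  unfolding MI_def
proof (elim exE)
  fix h k h' k' assume "F - G = Xp p * h + smult (int p) k" "F' - G' = Xp p * h' + smult (int p) k'"
  hence "(F + F') - (G + G') = Xp p * (h + h') + smult (int p) (k + k')" by (simp add: algebra_simps smult_add_right)
  thus "\<exists>h k. F + F' - (G + G') = Xp p * h + smult (int p) k" by blast
qed

lemma MI_mult_right: "MI p F G \<Longrightarrow> MI p (F * K) (G * K)"
  unfolding MI_def
proof (elim exE)
  fix h k assume "F - G = Xp p * h + smult (int p) k"
  hence "F * K - G * K = Xp p * (h * K) + smult (int p) (k * K)"
  proof -
    have "F * K - G * K = (F - G) * K" by (simp add: algebra_simps)
    also have "\<dots> = Xp p * (h * K) + smult (int p) (k * K)"
      using \<open>F - G = _\<close> by (simp add: algebra_simps)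
    finally show ?thesis .
  qed
  thus "\<exists>h k. F * K - G * K = Xp p * h + smult (int p) k" by blast
qed

lemma MI_mult: "MI p F G \<Longrightarrow> MI p F' G' \<Longrightarrow> MI p (F * F') (G * G')"
proof -
  assume a: "MI p F G" "MI p F' G'"
  have "MI p (F * F') (G * F')" using MI_mult_right[OF a(1)] .
  moreover have "MI p (F' * G) (G' * G)" using MI_mult_right[OF a(2)] .
  hence "MI p (G * F') (G * G')" by (simp add: mult.commute)
  ultimately show ?thesis by (rule MI_trans)
qed

lemma MI_smult: "MI p F G \<Longrightarrow> MI p (smult c F) (smult c G)"
  using MI_mult_right[of p F G "[:c:]"] by (simp add: mult.commute)

lemma MI_sum: "(\<And>i. i \<in> S \<Longrightarrow> MI p (f i) (g i)) \<Longrightarrow> MI p (\<Sum>i\<in>S. f i) (\<Sum>i\<in>S. g i)"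
proof (induction S rule: infinite_finite_induct)
  case (infinite A) thus ?case by (simp add: MI_refl)
next
  case empty thus ?case by (simp add: MI_refl)
next
  case (insert x F) thus ?case by (simp add: MI_add)
qed

lemma dvd_coeffs_iff: "(\<forall>i. c dvd coeff Q i) \<longleftrightarrow> (\<exists>k. Q = smult c (k :: int poly))"
proof
  assume a: "\<forall>i. c dvd coeff Q i"
  have "Q = smult c (map_poly (\<lambda>x. x div c) Q)"
    by (rule poly_eqI) (use a in \<open>simp add: coeff_map_poly\<close>)
  thus "\<exists>k. Q = smult c k" by blast
qed auto

lemma MI_iff: "MI p F G \<longleftrightarrow> (\<exists>h. \<forall>i. int p dvd coeff (F - G - Xp p * h) i)"
  unfolding MI_def dvd_coeffs_iff by (auto simp: algebra_simps)

lemma MI_of_dvd: "(\<forall>i. int p dvd coeff (F - G) i) \<Longrightarrow> MI p F G"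
  unfolding MI_iff by (rule exI[of _ 0]) simp



lemma frobenius:
  fixes a b :: "'a :: comm_ring_1"
  assumes "prime p"
  shows "\<exists>c. (a + b) ^ p = a ^ p + b ^ p + of_nat p * c"
proof -
  have p1: "p \<ge> 1" using prime_gt_1_nat[OF assms] by simp
  define c where "c = (\<Sum>k\<in>{1..<p}. of_nat ((p choose k) div p) * a ^ k * b ^ (p - k) :: 'a)"
  define g where "g = (\<lambda>k. of_nat (p choose k) * a ^ k * b ^ (p - k) :: 'a)"
  have set: "{..p} = insert p (insert 0 {1..<p})" using p1 by auto
  have "(a + b) ^ p = sum g {..p}"
    unfolding g_def by (rule binomial_ring)
  also have "\<dots> = g p + (g 0 + sum g {1..<p})"
    unfolding set using p1 by (subst sum.insert; simp)+
  also have "g p = a ^ p" unfolding g_def by simp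
  also have "g 0 = b ^ p" unfolding g_def by simp
  also have "sum g {1..<p} = of_nat p * c"
    unfolding c_def sum_distrib_left
  proof (rule sum.cong)
    fix k assume k: "k \<in> {1..<p}"
    have "p dvd p choose k" using k assms by (intro dvd_choose_prime) auto
    hence "p choose k = p * ((p choose k) div p)" by simp
    hence "(of_nat (p choose k) :: 'a) = of_nat p * of_nat ((p choose k) div p)"
      by (metis of_nat_mult)
    thus "g k = of_nat p * (of_nat ((p choose k) div p) * a ^ k * b ^ (p - k))"
      unfolding g_def by (simp add: ac_simps)
  qed (rule refl)
  finally show ?thesis by (auto simp: add.assoc)
qed


lemma fermat_nat_aux:
  assumes "prime p" shows "int p dvd (int n) ^ p - int n"
proof (induction n)
  case 0 thus ?case using assms prime_gt_0_nat by (simp add: power_0_left)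
next
  case (Suc n)
  obtain c where c: "(int n + 1) ^ p = int n ^ p + 1 ^ p + of_nat p * c" using frobenius[OF assms] by blast
  have "int (Suc n) ^ p - int (Suc n) = (int n + 1) ^ p - (int n + 1)" by (simp add: add.commute)
  also have "\<dots> = (int n ^ p - int n) + int p * c" unfolding c by (simp add: ac_simps)
  finally have eq: "int (Suc n) ^ p - int (Suc n) = (int n ^ p - int n) + int p * c" .
  show ?case unfolding eq by (rule dvd_add[OF Suc.IH]) simp
qed

lemma fermat_int:
  assumes "prime p" shows "int p dvd a ^ p - (a :: int)"
proof -
  have P0: "int p > 0" using assms prime_gt_0_nat by simp
  define m where "m = nat (a mod int p)"
  have am: "int m = a mod int p" using P0 unfolding m_def by simp
  have "[a ^ p = int m ^ p] (mod int p)" unfolding am by (intro cong_pow) (simp add: cong_def)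
  moreover have "[int m ^ p = int m] (mod int p)" using fermat_nat_aux[OF assms, of m]
    by (simp add: cong_iff_dvd_diff)
  moreover have "[int m = a] (mod int p)" unfolding am by (simp add: cong_def)
  ultimately have "[a ^ p = a] (mod int p)" by (meson cong_trans)
  thus ?thesis by (simp add: cong_iff_dvd_diff)
qed

lemma Xp_pcompose:
  assumes "prime p"
  shows "\<exists>c. Xp p \<circ>\<^sub>p [:A, 1:] = Xp p + smult (int p) c"
proof -
  obtain c where c: "([:A:] + monom 1 1) ^ p = [:A:] ^ p + (monom 1 1) ^ p + of_nat p * c"
    using frobenius[OF assms] by blast
  have q: "[:A, 1:] = [:A:] + monom (1::int) 1" by (simp add: monom_altdef)
  obtain d where d: "A ^ p - A = int p * d" using fermat_int[OF assms, of A] by (auto elim: dvdE)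
  have e1: "Xp p \<circ>\<^sub>p [:A, 1:] = [:A, 1:] ^ p - [:A, 1:]"
    unfolding Xp_def by (simp add: pcompose_diff pcompose_monom_gen)
  have e2: "[:A, 1:] ^ p = [:A ^ p:] + monom 1 p + smult (int p) c"
    unfolding q c by (simp add: poly_const_pow monom_power of_nat_poly)
  have e3: "[:A ^ p:] = [:A:] + smult (int p) [:d:]"
    using d by (simp add: algebra_simps)
  have aux: "\<And>a e x f y :: int poly. (a + e + x + f) - (a + y) = (x - y) + (e + f)" by algebra
  have "Xp p \<circ>\<^sub>p [:A, 1:] = ([:A:] + smult (int p) [:d:] + monom 1 p + smult (int p) c) - ([:A:] + monom 1 1)"
    unfolding e1 e2 e3 using q by simp
  also have "\<dots> = Xp p + smult (int p) (c + [:d:])"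
    unfolding aux Xp_def smult_add_right by (simp add: add.commute)
  finally have "Xp p \<circ>\<^sub>p [:A, 1:] = Xp p + smult (int p) (c + [:d:])" .
  thus ?thesis by blast
qed

lemma MI_pcompose:
  assumes "prime p" "MI p F G"
  shows "MI p (F \<circ>\<^sub>p [:A, 1:]) (G \<circ>\<^sub>p [:A, 1:])"
proof -
  obtain h k where hk: "F - G = Xp p * h + smult (int p) k" using assms(2) unfolding MI_def by blast
  obtain c where c: "Xp p \<circ>\<^sub>p [:A, 1:] = Xp p + smult (int p) c" using Xp_pcompose[OF assms(1)] by blast
  have "F \<circ>\<^sub>p [:A, 1:] - G \<circ>\<^sub>p [:A, 1:] = (F - G) \<circ>\<^sub>p [:A, 1:]" by (simp add: pcompose_diff)
  also have "\<dots> = (Xp p \<circ>\<^sub>p [:A, 1:]) * (h \<circ>\<^sub>p [:A, 1:]) + smult (int p) (k \<circ>\<^sub>p [:A, 1:])"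
    unfolding hk by (simp add: pcompose_add pcompose_mult pcompose_smult)
  also have "\<dots> = Xp p * (h \<circ>\<^sub>p [:A, 1:]) + smult (int p) (c * (h \<circ>\<^sub>p [:A, 1:]) + k \<circ>\<^sub>p [:A, 1:])"
    unfolding c by (simp add: algebra_simps smult_add_right)
  finally show ?thesis unfolding MI_def by blast
qed

definition red :: "nat \<Rightarrow> nat \<Rightarrow> nat" where
  "red p k = (if k = 0 then 0 else (k - 1) mod (p - 1) + 1)"

lemma red_less: "p \<ge> 2 \<Longrightarrow> red p k < p"
proof -
  assume p2: "p \<ge> 2"
  define m where "m = (k - 1) mod (p - 1)"
  have m: "m < p - 1" unfolding m_def using p2 by (intro mod_less_divisor) simp
  have "red p k = (if k = 0 then 0 else m + 1)" unfolding red_def m_def by simp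
  thus ?thesis using m p2 by (cases "k = 0") (simp, simp add: less_diff_conv)
qed

lemma MI_monom_red:
  assumes "p \<ge> 2" shows "MI p (monom 1 k) (monom 1 (red p k))"
proof (induction k rule: less_induct)
  case (less k)
  show ?case
  proof (cases "k < p")
    case True
    hence "red p k = k" unfolding red_def by auto
    thus ?thesis by (simp add: MI_refl)
  next
    case False
    define k' where "k' = k - (p - 1)"
    have kk: "k' < k" "k' \<ge> 1" using False assms unfolding k'_def by auto
    have "Xp p * monom 1 (k - p) = monom 1 k - monom 1 k'"
      unfolding Xp_def k'_def using False assms by (simp add: algebra_simps mult_monom Suc_diff_le)
    hence "MI p (monom 1 k) (monom 1 k')" unfolding MI_def
      by (intro exI[of _ "monom 1 (k - p)"] exI[of _ 0]) simp
    moreover have "red p k' = red p k"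
    proof -
      have "(k - 1) mod (p - 1) = (k - 1 - (p - 1)) mod (p - 1)"
        using False by (intro le_mod_geq) auto
      moreover have "k - 1 - (p - 1) = k' - 1" unfolding k'_def using False assms by auto
      ultimately have "(k' - 1) mod (p - 1) = (k - 1) mod (p - 1)" by simp
      thus ?thesis using kk False assms unfolding red_def by auto
    qed
    ultimately show ?thesis using less.IH[OF kk(1)] MI_trans by metis
  qed
qed

definition redp :: "nat \<Rightarrow> int poly \<Rightarrow> int poly" where
  "redp p F = (\<Sum>k\<le>degree F. monom (coeff F k) (red p k))"

lemma MI_redp: assumes "p \<ge> 2" shows "MI p F (redp p F)"
proof -
  have "F = (\<Sum>k\<le>degree F. smult (coeff F k) (monom 1 k))"
    using poly_as_sum_of_monoms[of F] by (simp add: smult_monom)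
  moreover have "redp p F = (\<Sum>k\<le>degree F. smult (coeff F k) (monom 1 (red p k)))"
    unfolding redp_def by (simp add: smult_monom)
  moreover have "MI p (\<Sum>k\<le>degree F. smult (coeff F k) (monom 1 k))
                      (\<Sum>k\<le>degree F. smult (coeff F k) (monom 1 (red p k)))"
    using assms by (intro MI_sum MI_smult MI_monom_red)
  ultimately show ?thesis by simp
qed

lemma coeff_redp: "coeff (redp p F) j = (\<Sum>k\<le>degree F. if red p k = j then coeff F k else 0)"
  unfolding redp_def by (simp add: coeff_sum coeff_monom)

lemma degree_redp: assumes "p \<ge> 2" shows "degree (redp p F) < p"
proof -
  have "degree (redp p F) \<le> p - 1"
  proof (rule degree_le, intro allI impI)
    fix j assume "p - 1 < j"
    have "\<And>k. red p k \<noteq> j"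
    proof -
      fix k show "red p k \<noteq> j" using red_less[OF assms, of k] \<open>p - 1 < j\<close> by linarith
    qed
    thus "coeff (redp p F) j = 0" unfolding coeff_redp by simp
  qed
  thus ?thesis using assms by linarith
qed



lemma MI_small:
  assumes "prime p" "degree Q < p" "MI p Q 0"
  shows "int p dvd coeff Q i"
proof -
  have p2: "p \<ge> 2" using prime_ge_2_nat[OF assms(1)] .
  obtain h k where hk: "Q = Xp p * h + smult (int p) k" using assms(3) unfolding MI_def by auto
  have all: "\<forall>j. int p dvd coeff h j"
  proof (rule ccontr)
    assume "\<not> (\<forall>j. int p dvd coeff h j)"
    define S where "S = {j. \<not> int p dvd coeff h j}"
    have Sne: "S \<noteq> {}" using \<open>\<not> (\<forall>j. _)\<close> unfolding S_def by auto
    have Ssub: "S \<subseteq> {..degree h}"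
    proof
      fix j assume "j \<in> S"
      hence "coeff h j \<noteq> 0" unfolding S_def by auto
      thus "j \<in> {..degree h}" using le_degree by auto
    qed
    hence finS: "finite S" using finite_subset by blast
    define j where "j = Max S"
    have jS: "j \<in> S" unfolding j_def using finS Sne by (rule Max_in)
    have big: "p + j - 1 \<notin> S"
    proof
      assume "p + j - 1 \<in> S"
      hence "p + j - 1 \<le> j" unfolding j_def by (rule Max_ge[OF finS])
      thus False using p2 by simp
    qed
    have cX: "coeff (Xp p * h) (p + j) = coeff h j - coeff h (p + j - 1)"
      unfolding Xp_def using p2 by (simp add: left_diff_distrib coeff_monom_mult)
    have "coeff Q (p + j) = 0" using assms(2) by (intro coeff_eq_0) simp
    hence "0 = coeff h j - coeff h (p + j - 1) + int p * coeff k (p + j)"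
      unfolding hk by (simp add: cX)
    hence eqj: "coeff h j = coeff h (p + j - 1) - int p * coeff k (p + j)" by simp
    have "int p dvd coeff h (p + j - 1)" using big unfolding S_def by auto
    hence "int p dvd coeff h j" unfolding eqj by (intro dvd_diff) auto
    thus False using jS unfolding S_def by auto
  qed
  then obtain h' where h': "h = smult (int p) h'" using dvd_coeffs_iff by blast
  have "Q = smult (int p) (Xp p * h' + k)" unfolding hk h' by (simp add: smult_add_right)
  thus ?thesis by simp
qed

lemma poly_red_props:
  assumes "prime p"
  shows "degree (poly_red p f) < p \<and> MI p (map_poly (rat_mod p) f) (poly_red p f)"
proof -
  have p2: "p \<ge> 2" using prime_ge_2_nat[OF assms(1)] .
  have P0: "int p > 0" using p2 by simp
  define Fb where "Fb = map_poly (rat_mod p) f"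
  define R where "R = redp p Fb"
  define g0 where "g0 = map_poly (\<lambda>c. c mod int p) R"
  let ?Pr = "\<lambda>g. degree g < p \<and> (\<forall>i. 0 \<le> coeff g i \<and> coeff g i < int p) \<and>
      (\<exists>h :: int poly. \<forall>i. int p dvd
         coeff (map_poly (rat_mod p) f - g - (monom 1 p - monom 1 1) * h) i)"
  have Pr_iff: "?Pr g \<longleftrightarrow> degree g < p \<and> (\<forall>i. 0 \<le> coeff g i \<and> coeff g i < int p) \<and> MI p Fb g" for g
    unfolding MI_iff Xp_def Fb_def by simp
  have cg0: "coeff g0 i = coeff R i mod int p" for i unfolding g0_def by (simp add: coeff_map_poly)
  have "degree g0 \<le> degree R" unfolding g0_def by (rule map_poly_degree_leq)
  hence dg0: "degree g0 < p" using degree_redp[OF p2, of Fb] unfolding R_def by linarith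
  have "MI p R g0"
    by (rule MI_of_dvd) (simp add: cg0 minus_mod_eq_mult_div)
  hence MIg0: "MI p Fb g0" using MI_redp[OF p2, of Fb] unfolding R_def by (metis MI_trans)
  have pr0: "?Pr g0" unfolding Pr_iff using dg0 MIg0 P0 by (simp add: cg0)
  have un: "g = g0" if "?Pr g" for g
  proof -
    have a: "degree g < p" "\<forall>i. 0 \<le> coeff g i \<and> coeff g i < int p" "MI p Fb g"
      using that unfolding Pr_iff by auto
    have "MI p g g0" using MI_trans[OF MI_sym[OF a(3)] MIg0] .
    hence "MI p (g - g0) 0" unfolding MI_def by simp
    moreover have "degree (g - g0) < p" using a(1) dg0 degree_diff_le_max[of g g0] by linarith
    ultimately have d: "int p dvd coeff (g - g0) i" for i using MI_small[OF assms] by blast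
    show ?thesis
    proof (rule poly_eqI)
      fix i
      have "int p dvd coeff g i - coeff g0 i" using d[of i] by simp
      hence "coeff g i mod int p = coeff g0 i mod int p" by (simp add: mod_eq_dvd_iff)
      moreover have "coeff g i mod int p = coeff g i" using a(2) by simp
      moreover have "coeff g0 i mod int p = coeff g0 i" using pr0 by simp
      ultimately show "coeff g i = coeff g0 i" by simp
    qed
  qed
  have "poly_red p f = g0" unfolding poly_red_def using pr0 un by (rule the_equality)
  thus ?thesis using dg0 MIg0 unfolding Fb_def by simp
qed



lemma alpha_integral:
  assumes pp: "prime p" and fint: "\<forall>i. p_integral p (coeff f i)" and n1: "degree f \<ge> 1"
    and lc: "\<not> int p dvd fst (quotient_of (lead_coeff f))"
    and c0: "\<not> int p dvd snd (quotient_of (poly f \<alpha>))"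
  shows "p_integral p \<alpha>"
proof (rule ccontr)
  assume na: "\<not> p_integral p \<alpha>"
  have pr: "prime (int p)" using pp by (simp add: prime_nat_int_transfer)
  define n where "n = degree f"
  obtain a b where ab: "quotient_of \<alpha> = (a, b)" by (cases "quotient_of \<alpha>") auto
  have b0: "b > 0" using ab quotient_of_denom_pos by blast
  have al: "\<alpha> = of_int a / of_int b" using ab quotient_of_div by blast
  have Pb: "int p dvd b" using na ab unfolding p_integral_def by simp
  have Pa: "\<not> int p dvd a"
  proof
    assume "int p dvd a"
    hence "is_unit (int p)" by (rule coprime_common_divisor[OF quotient_of_coprime[OF ab] _ Pb])
    thus False using pr not_prime_unit by blast
  qed
  define Fk where "Fk k = rat_mod p (coeff f k)" for k
  have RF: "Rm p (coeff f k) (Fk k)" for k unfolding Fk_def using rat_mod_props[OF pp] fint by blast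
  have nFn: "\<not> int p dvd Fk n"
  proof
    assume "int p dvd Fk n"
    hence "int p dvd fst (quotient_of (coeff f n))" using Rm_num[OF pp RF] by blast
    thus False using lc unfolding n_def by simp
  qed
  have eq: "(of_int b) ^ n * poly f \<alpha> = (\<Sum>k\<le>n. coeff f k * of_int (a ^ k * b ^ (n - k)))"
    unfolding poly_altdef n_def[symmetric] sum_distrib_left
  proof (rule sum.cong)
    fix k assume "k \<in> {..n}"
    hence kn: "k \<le> n" by simp
    have bn: "(of_int b :: rat) ^ n = of_int b ^ k * of_int b ^ (n - k)"
      using kn by (simp add: power_add[symmetric])
    show "of_int b ^ n * (coeff f k * \<alpha> ^ k) = coeff f k * of_int (a ^ k * b ^ (n - k))"
      unfolding bn al using b0 by (simp add: power_divide field_simps)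
  qed simp
  define S where "S = (\<Sum>k\<le>n. Fk k * (a ^ k * b ^ (n - k)))"
  have RS: "Rm p ((of_int b) ^ n * poly f \<alpha>) S"
    unfolding eq S_def using pp RF by (intro Rm_sum Rm_mult Rm_of_int) auto
  have Sdec: "S = Fk n * a ^ n + (\<Sum>k<n. Fk k * (a ^ k * b ^ (n - k)))"
    unfolding S_def by (simp add: lessThan_Suc_atMost[symmetric])
  have Ydvd: "int p dvd (\<Sum>k<n. Fk k * (a ^ k * b ^ (n - k)))"
  proof (rule dvd_sum)
    fix k assume "k \<in> {..<n}"
    hence "n - k > 0" by simp
    hence "b dvd b ^ (n - k)" by (simp add: dvd_power)
    hence "int p dvd b ^ (n - k)" using Pb dvd_trans by blast
    thus "int p dvd Fk k * (a ^ k * b ^ (n - k))" by simp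
  qed
  have nX: "\<not> int p dvd Fk n * a ^ n"
    using nFn Pa prime_dvd_power[OF pr, of a n] prime_dvd_mult_iff[OF pr, of "Fk n" "a ^ n"] by blast
  have nS: "\<not> int p dvd S"
  proof
    assume "int p dvd S"
    hence "int p dvd S - (\<Sum>k<n. Fk k * (a ^ k * b ^ (n - k)))" using Ydvd by (rule dvd_diff)
    hence "int p dvd Fk n * a ^ n" using Sdec by simp
    thus False using nX by simp
  qed
  obtain u v where uv: "(of_int b) ^ n * poly f \<alpha> = of_int u / of_int v" "\<not> int p dvd v"
    "int p dvd v * S - u" using RS unfolding Rm_def by blast
  have nu: "\<not> int p dvd u"
  proof
    assume "int p dvd u"
    hence "int p dvd v * S" using uv(3) dvd_add[of "int p" "v * S - u" u] by simp
    thus False using uv(2) nS pr by (simp add: prime_dvd_mult_iff)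
  qed
  obtain u0 v0 where q0: "quotient_of (poly f \<alpha>) = (u0, v0)" by (cases "quotient_of (poly f \<alpha>)") auto
  have v00: "v0 > 0" using q0 quotient_of_denom_pos by blast
  have nv0: "\<not> int p dvd v0" using c0 q0 by simp
  have v0': "v \<noteq> 0" using uv(2) by auto
  have "(of_int b) ^ n * (of_int u0 / of_int v0) = (of_int u / of_int v :: rat)"
    using uv(1) quotient_of_div[OF q0] by simp
  hence "of_int (b ^ n * u0 * v) = (of_int (u * v0) :: rat)" using v00 v0' by (simp add: field_simps)
  hence e: "b ^ n * u0 * v = u * v0" by (simp only: of_int_eq_iff)
  have "b dvd b ^ n" using n1 unfolding n_def by (simp add: dvd_power)
  hence "int p dvd b ^ n" using Pb by (rule dvd_trans[rotated])
  hence "int p dvd b ^ n * u0 * v" by (intro dvd_mult2)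
  hence "int p dvd u * v0" using e by simp
  thus False using nu nv0 pr by (simp add: prime_dvd_mult_iff)
qed



lemma pcompose_power_left: "(q ^ n) \<circ>\<^sub>p r = (q \<circ>\<^sub>p r) ^ n"
  by (induction n) (simp_all add: pcompose_mult one_pCons pcompose_const)

lemma rat_size_num: "log 2 \<bar>real_of_int (fst (quotient_of q))\<bar> \<le> real (rat_size q)"
  if "fst (quotient_of q) \<noteq> 0"
proof -
  obtain a b where ab: "quotient_of q = (a, b)" by (cases "quotient_of q") auto
  have a0: "a \<noteq> 0" using that ab by simp
  have "log 2 \<bar>real_of_int a\<bar> \<le> log 2 (real_of_int (\<bar>a\<bar> + 1))"
    using a0 by (subst log_le_cancel_iff) auto
  also have "\<dots> \<le> real_of_int \<lceil>log 2 (real_of_int (\<bar>a\<bar> + 1))\<rceil>" by (rule le_of_int_ceiling)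
  also have "\<dots> \<le> real (nat \<lceil>log 2 (real_of_int (\<bar>a\<bar> + 1))\<rceil>)" by linarith
  also have "\<dots> \<le> real (rat_size q)"
  proof -
    have "0 \<le> log 2 (real_of_int (\<bar>a\<bar> + 1))" by simp
    hence h1: "0 \<le> \<lceil>log 2 (real_of_int (\<bar>a\<bar> + 1))\<rceil>" by linarith
    have "0 \<le> log 2 (real_of_int (b + 1))" using quotient_of_denom_pos[OF ab] by simp
    hence h2: "0 \<le> \<lceil>log 2 (real_of_int (b + 1))\<rceil>" by linarith
    show ?thesis unfolding rat_size_def ab using h1 h2 by simp
  qed
  finally show ?thesis using ab by simp
qed

lemma rat_size_den: "log 2 (real_of_int (snd (quotient_of q))) \<le> real (rat_size q)"
proof -
  obtain a b where ab: "quotient_of q = (a, b)" by (cases "quotient_of q") auto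
  have b0: "b > 0" using ab quotient_of_denom_pos by blast
  have "log 2 (real_of_int b) \<le> log 2 (real_of_int (b + 1))"
    using b0 by (subst log_le_cancel_iff) auto
  also have "\<dots> \<le> real_of_int \<lceil>log 2 (real_of_int (b + 1))\<rceil>" by (rule le_of_int_ceiling)
  also have "\<dots> \<le> real (nat \<lceil>log 2 (real_of_int (b + 1))\<rceil>)" by linarith
  also have "\<dots> \<le> real (rat_size q)"
  proof -
    have "0 \<le> log 2 (real_of_int (\<bar>a\<bar> + 1))" by simp
    hence h1: "0 \<le> \<lceil>log 2 (real_of_int (\<bar>a\<bar> + 1))\<rceil>" by linarith
    have "0 \<le> log 2 (real_of_int (b + 1))" using b0 by simp
    hence h2: "0 \<le> \<lceil>log 2 (real_of_int (b + 1))\<rceil>" by linarith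
    show ?thesis unfolding rat_size_def ab using h1 h2 by simp
  qed
  finally show ?thesis using ab by simp
qed



lemma G_coeff:
  "coeff ([:a:] + (\<Sum>i=1..t. monom (c i) (e i))) k =
   (if k = 0 then a else 0) + (\<Sum>i=1..t. if e i = k then c i else (0::rat))"
  by (simp add: coeff_sum coeff_monom coeff_pCons split: nat.split)

theorem mainTheorem2:
  fixes \<alpha> :: rat and f :: "rat poly" and t :: nat and c :: "nat \<Rightarrow> rat" and e :: "nat \<Rightarrow> nat"
    and B_T B_H B_N :: nat
  assumes f_def: "f = [:c 0:] + (\<Sum>i=1..t. smult (c i) ([:-\<alpha>, 1:] ^ e i))"
    and c_nz: "\<forall>i\<in>{1..t}. c i \<noteq> 0"
    and e_pos: "t \<ge> 1 \<longrightarrow> 0 < e 1"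
    and e_mono: "\<forall>i j. 1 \<le> i \<and> i < j \<and> j \<le> t \<longrightarrow> e i < e j"
    and BT: "t \<le> B_T"
    and BH: "\<forall>i\<le>t. rat_size (c i) \<le> B_H"
    and BN: "log 2 (real (degree f)) \<le> real B_N"
    and deg: "degree f > 2 * B_T"
  shows "\<exists>C1 C2 :: nat. C1 \<ge> 1 \<and> C2 \<ge> 1 \<and>
           log 2 (real C1) \<le> 2 * real B_H \<and>
           log 2 (real C2) \<le> real B_N * (3 * real B_T - 1) \<and>
           (\<forall>p. prime p \<and> \<not> p dvd C1 \<and> \<not> (p - 1) dvd C2 \<and>
                (\<forall>i. p_integral p (coeff f i))
                \<longrightarrow> degree (poly_red p f) > 2 * B_T)"
proof -
  define Gq where "Gq = [:c 0:] + (\<Sum>i=1..t. monom (c i) (e i))"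
  have fq: "f \<circ>\<^sub>p [:\<alpha>, 1:] = Gq"
  proof -
    have l: "[:-\<alpha>, 1:] \<circ>\<^sub>p [:\<alpha>, 1:] = [:0, 1:]" by (simp add: pcompose_pCons one_pCons pcompose_const)
    show ?thesis unfolding f_def Gq_def
      by (simp add: pcompose_add pcompose_sum pcompose_smult pcompose_const pcompose_power_left l monom_altdef)
  qed
  have dq: "degree [:\<alpha>, 1::rat:] = 1" by simp
  have degfG: "degree Gq = degree f" using fq degree_pcompose[of f "[:\<alpha>, 1:]"] dq by simp
  have t1: "t \<ge> 1"
  proof (rule ccontr)
    assume "\<not> t \<ge> 1" hence "t = 0" by simp
    hence "f = [:c 0:]" using f_def by simp
    thus False using deg by simp
  qed
  have e_ge1: "e i \<ge> 1" if "i \<in> {1..t}" for i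
  proof (cases "i = 1")
    case True thus ?thesis using e_pos t1 by simp
  next
    case False thus ?thesis using that e_mono[rule_format, of 1 i] by auto
  qed
  have e_le: "e i \<le> e t" if "i \<in> {1..t}" for i
    using that e_mono[rule_format, of i t] by (cases "i = t") auto
  have e_inj: "i = j" if "i \<in> {1..t}" "j \<in> {1..t}" "e i = e j" for i j
    using that e_mono[rule_format, of i j] e_mono[rule_format, of j i] by (cases i j rule: linorder_cases) auto
  have cGe: "coeff Gq (e j) = c j" if j: "j \<in> {1..t}" for j
  proof -
    have "(\<Sum>i=1..t. if e i = e j then c i else 0) = (\<Sum>i=1..t. if i = j then c i else 0)"
    proof (rule sum.cong[OF refl])
      fix i assume i: "i \<in> {1..t}"
      have "e i = e j \<longleftrightarrow> i = j" using e_inj[OF i j] by auto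
      thus "(if e i = e j then c i else 0) = (if i = j then c i else 0)" by simp
    qed
    also have "\<dots> = c j" using j by simp
    finally show ?thesis unfolding Gq_def G_coeff using e_ge1[OF j] by simp
  qed
  have cG0: "coeff Gq k = 0" if "k \<noteq> 0" "k \<notin> e ` {1..t}" for k
    unfolding Gq_def G_coeff using that by (auto intro!: sum.neutral)
  define n where "n = e t"
  have tt: "t \<in> {1..t}" using t1 by simp
  have degG: "degree Gq = n"
  proof (rule antisym)
    show "degree Gq \<le> n"
    proof (rule degree_le, intro allI impI)
      fix k assume "n < k"
      hence "k \<noteq> 0" "k \<notin> e ` {1..t}" using e_le unfolding n_def by force+
      thus "coeff Gq k = 0" by (rule cG0)
    qed
    show "n \<le> degree Gq" unfolding n_def using cGe[OF tt] c_nz tt by (intro le_degree) auto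
  qed
  have degf: "degree f = n" using degG degfG by simp
  have lcf: "lead_coeff f = c t"
  proof -
    have "lead_coeff (f \<circ>\<^sub>p [:\<alpha>, 1:]) = lead_coeff f * lead_coeff [:\<alpha>, 1::rat:] ^ degree f"
      using dq by (intro lead_coeff_comp) simp
    hence "lead_coeff Gq = lead_coeff f" using fq by simp
    thus ?thesis using degG cGe[OF tt] unfolding n_def by simp
  qed
  have pfa: "poly f \<alpha> = c 0"
  proof -
    have "poly f \<alpha> = poly (f \<circ>\<^sub>p [:\<alpha>, 1:]) 0" by (simp add: poly_pcompose)
    also have "\<dots> = c 0"
    proof -
      have z: "(\<Sum>i=1..t. poly (monom (c i) (e i)) 0) = 0"
      proof (rule sum.neutral, rule ballI)
        fix i assume "i \<in> {1..t}"
        hence "e i \<noteq> 0" using e_ge1 by force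
        thus "poly (monom (c i) (e i)) 0 = 0" by (simp add: poly_monom)
      qed
      show ?thesis unfolding fq Gq_def using z by (simp add: poly_sum)
    qed
    finally show ?thesis .
  qed
  have n_big: "n > 2 * B_T" using deg degf by simp
  have n1: "n \<ge> 1" using n_big by simp
  define ut where "ut = fst (quotient_of (c t))"
  define v0 where "v0 = snd (quotient_of (c 0))"
  have ut0: "ut \<noteq> 0"
  proof
    assume "ut = 0"
    moreover have "c t = of_int ut / of_int (snd (quotient_of (c t)))"
      by (rule quotient_of_div) (simp add: ut_def)
    ultimately have "c t = 0" by simp
    thus False using c_nz tt by auto
  qed
  have v0pos: "v0 > 0" unfolding v0_def by (rule quotient_of_denom_pos')
  define C1 where "C1 = nat \<bar>ut\<bar> * nat v0"
  define C2 where "C2 = (\<Prod>i\<in>{1..<t}. n - e i) * (\<Prod>k\<in>{1..2*B_T}. n - k)"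
  have C1ge: "C1 \<ge> 1" unfolding C1_def using ut0 v0pos by (simp add: Suc_le_eq)
  have realC1: "real C1 = \<bar>real_of_int ut\<bar> * real_of_int v0" unfolding C1_def using v0pos by simp
  have logC1: "log 2 (real C1) \<le> 2 * real B_H"
  proof -
    have "log 2 (real C1) = log 2 \<bar>real_of_int ut\<bar> + log 2 (real_of_int v0)"
      unfolding realC1 using ut0 v0pos by (simp add: log_mult)
    also have "\<dots> \<le> real (rat_size (c t)) + real (rat_size (c 0))"
      using rat_size_num[of "c t"] rat_size_den[of "c 0"] ut0 unfolding ut_def v0_def by linarith
    also have "\<dots> \<le> 2 * real B_H" using BH[rule_format, of t] BH[rule_format, of 0] by simp
    finally show ?thesis .
  qed
  have f1: "1 \<le> n - e i \<and> n - e i \<le> n" if "i \<in> {1..<t}" for i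
    using that e_mono[rule_format, of i t] unfolding n_def by auto
  have f2: "1 \<le> n - k \<and> n - k \<le> n" if "k \<in> {1..2*B_T}" for k
    using that n_big by auto
  have C2ge: "C2 \<ge> 1" unfolding C2_def
    using f1 f2 by (simp add: Suc_le_eq prod_pos)
  have "C2 \<le> n ^ (t - 1) * n ^ (2 * B_T)" unfolding C2_def
    using f1 f2 n1 by (intro mult_le_mono prod_le_power) auto
  hence "C2 \<le> n ^ (t - 1 + 2 * B_T)" by (simp add: power_add)
  hence C2le: "real C2 \<le> real n ^ (t - 1 + 2 * B_T)"
    using of_nat_le_iff[of C2 "n ^ (t - 1 + 2 * B_T)"] by simp
  have logC2: "log 2 (real C2) \<le> real B_N * (3 * real B_T - 1)"
  proof -
    have "log 2 (real C2) \<le> log 2 (real n ^ (t - 1 + 2 * B_T))"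
      using C2le C2ge n1 by (subst log_le_cancel_iff) auto
    also have "\<dots> = real (t - 1 + 2 * B_T) * log 2 (real n)" using n1 by (simp add: log_nat_power)
    also have "\<dots> \<le> real (t - 1 + 2 * B_T) * real B_N" using BN degf by (intro mult_left_mono) auto
    also have "\<dots> \<le> real B_N * (3 * real B_T - 1)"
    proof -
      have "real (t - 1 + 2 * B_T) \<le> 3 * real B_T - 1" using t1 BT by linarith
      thus ?thesis by (simp add: mult.commute mult_left_mono)
    qed
    finally show ?thesis .
  qed
  show ?thesis
  proof (rule exI[of _ C1], rule exI[of _ C2], intro conjI allI impI)
    show "C1 \<ge> 1" by (rule C1ge)
    show "C2 \<ge> 1" by (rule C2ge)
    show "log 2 (real C1) \<le> 2 * real B_H" by (fact logC1)
    show "log 2 (real C2) \<le> real B_N * (3 * real B_T - 1)" by (fact logC2)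
    fix p assume H: "prime p \<and> \<not> p dvd C1 \<and> \<not> (p - 1) dvd C2 \<and> (\<forall>i. p_integral p (coeff f i))"
    have pp: "prime p" and nC1: "\<not> p dvd C1" and nC2: "\<not> (p - 1) dvd C2"
      and fint: "\<forall>i. p_integral p (coeff f i)" using H by auto
    have p2: "p \<ge> 2" using prime_ge_2_nat[OF pp] .
    have pr: "prime (int p)" using pp by (simp add: prime_nat_int_transfer)
    have nut: "\<not> int p dvd ut"
    proof
      assume "int p dvd ut"
      hence "int p dvd int (nat \<bar>ut\<bar>)" by simp
      hence "p dvd nat \<bar>ut\<bar>" by (simp only: int_dvd_int_iff)
      hence "p dvd C1" unfolding C1_def by simp
      thus False using nC1 by simp
    qed
    have nv0: "\<not> int p dvd v0"
    proof
      assume "int p dvd v0"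
      hence "int p dvd int (nat v0)" using v0pos by simp
      hence "p dvd nat v0" by (simp only: int_dvd_int_iff)
      hence "p dvd C1" unfolding C1_def by simp
      thus False using nC1 by simp
    qed
    have aint: "p_integral p \<alpha>"
      using alpha_integral[OF pp fint, of \<alpha>] n1 degf lcf pfa nut nv0 unfolding ut_def v0_def by simp
    define A where "A = rat_mod p \<alpha>"
    have RA: "Rm p \<alpha> A" unfolding A_def using rat_mod_props[OF pp aint] by simp
    define Fb where "Fb = map_poly (rat_mod p) f"
    have PRf: "PR p f Fb" unfolding PR_def Fb_def
    proof
      fix k
      have "rat_mod p 0 = 0" using p2 by (intro rat_mod_0) simp
      thus "Rm p (coeff f k) (coeff (map_poly (rat_mod p) f) k)"
        using rat_mod_props[OF pp] fint by (simp add: coeff_map_poly)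
    qed
    have PRq: "PR p [:\<alpha>, 1:] [:A, 1:]"
      unfolding PR_def using RA Rm_of_int[OF pp, of 1] Rm_of_int[OF pp, of 0]
      by (auto simp: coeff_pCons split: nat.split)
    define Fz where "Fz = Fb \<circ>\<^sub>p [:A, 1:]"
    have PRz: "PR p Gq Fz" unfolding Fz_def fq[symmetric] by (rule PR_pcompose[OF pp PRf PRq])
    define g where "g = poly_red p f"
    have gp: "degree g < p" "MI p Fb g" using poly_red_props[OF pp, of f] unfolding g_def Fb_def by auto
    have "MI p Fz (g \<circ>\<^sub>p [:A, 1:])" unfolding Fz_def by (rule MI_pcompose[OF pp gp(2)])
    hence "MI p (g \<circ>\<^sub>p [:A, 1:]) (redp p Fz)" by (rule MI_trans[OF MI_sym MI_redp[OF p2]])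
    hence MI0: "MI p (g \<circ>\<^sub>p [:A, 1:] - redp p Fz) 0" unfolding MI_def by simp
    have dgq: "degree (g \<circ>\<^sub>p [:A, 1:]) = degree g" by (simp add: degree_pcompose)
    have "degree (g \<circ>\<^sub>p [:A, 1:] - redp p Fz) < p"
      using degree_diff_le_max[of "g \<circ>\<^sub>p [:A, 1:]" "redp p Fz"] dgq gp(1) degree_redp[OF p2, of Fz]
      by linarith
    hence dvdj: "int p dvd coeff (g \<circ>\<^sub>p [:A, 1:]) j - coeff (redp p Fz) j" for j
      using MI_small[OF pp _ MI0] by simp
    define j where "j = red p n"
    have j_def': "j = (n - 1) mod (p - 1) + 1" unfolding j_def red_def using n1 by simp
    have red_ne: "red p (e i) \<noteq> j" if i: "i \<in> {1..<t}" for i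
    proof
      assume eq: "red p (e i) = j"
      have ei1: "e i \<ge> 1" using e_ge1 i by auto
      have ein: "e i < n" using i e_mono[rule_format, of i t] unfolding n_def by auto
      have "(e i - 1) mod (p - 1) = (n - 1) mod (p - 1)" using eq ei1 unfolding j_def' red_def by simp
      hence "(p - 1) dvd (n - 1) - (e i - 1)" using ein by (subst mod_eq_dvd_iff_nat[symmetric]) auto
      moreover have "(n - 1) - (e i - 1) = n - e i" using ei1 ein by simp
      ultimately have d1: "(p - 1) dvd n - e i" by simp
      have d2: "(n - e i) dvd C2" unfolding C2_def using i by (intro dvd_mult2 dvd_prodI) auto
      show False using nC2 dvd_trans[OF d1 d2] by simp
    qed
    have j_big: "j > 2 * B_T"
    proof (rule ccontr)
      assume "\<not> j > 2 * B_T"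
      hence jk: "j \<in> {1..2*B_T}" using j_def' by auto
      have "n - 1 = (p - 1) * ((n - 1) div (p - 1)) + (n - 1) mod (p - 1)" by simp
      hence "n - j = (p - 1) * ((n - 1) div (p - 1))" using j_def' n1 by linarith
      hence d1: "(p - 1) dvd n - j" by simp
      have d2: "(n - j) dvd C2" unfolding C2_def using jk by (intro dvd_mult dvd_prodI) auto
      show False using nC2 dvd_trans[OF d1 d2] by simp
    qed
    have RFz: "Rm p (coeff Gq k) (coeff Fz k)" for k using PRz unfolding PR_def by simp
    have nFn: "\<not> int p dvd coeff Fz n"
    proof
      assume "int p dvd coeff Fz n"
      hence "int p dvd fst (quotient_of (coeff Gq n))" using Rm_num[OF pp RFz] by blast
      thus False using nut cGe[OF tt] unfolding ut_def n_def by simp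
    qed
    hence "coeff Fz n \<noteq> 0" by auto
    hence nle: "n \<le> degree Fz" by (rule le_degree)
    have others: "int p dvd (if red p k = j then coeff Fz k else 0)" if k: "k \<in> {..degree Fz} - {n}" for k
    proof (cases "red p k = j")
      case False thus ?thesis by simp
    next
      case True
      have k0: "k \<noteq> 0" using True j_def' unfolding red_def by (cases "k = 0") auto
      have "k \<notin> e ` {1..t}"
      proof
        assume "k \<in> e ` {1..t}"
        then obtain i where i: "i \<in> {1..t}" "k = e i" by auto
        have "i \<noteq> t" using i k unfolding n_def by auto
        hence "i \<in> {1..<t}" using i by auto
        thus False using red_ne True i by auto
      qed
      hence "coeff Gq k = 0" using cG0 k0 by simp
      hence "Rm p 0 (coeff Fz k)" using RFz[of k] by simp
      hence "int p dvd coeff Fz k - 0" using Rm_eq_dvd[OF pp _ Rm_of_int[OF pp, of 0]] by simp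
      thus ?thesis using True by simp
    qed
    define Y where "Y = (\<Sum>k\<in>{..degree Fz} - {n}. if red p k = j then coeff Fz k else 0)"
    have Ydvd: "int p dvd Y" unfolding Y_def by (rule dvd_sum) (rule others)
    have cr: "coeff (redp p Fz) j = coeff Fz n + Y"
      unfolding coeff_redp Y_def using nle by (subst sum.remove[of _ n]) (auto simp: j_def)
    have ncr: "\<not> int p dvd coeff (redp p Fz) j"
    proof
      assume "int p dvd coeff (redp p Fz) j"
      hence "int p dvd coeff (redp p Fz) j - Y" using Ydvd by (rule dvd_diff)
      thus False using nFn cr by simp
    qed
    have "\<not> int p dvd coeff (g \<circ>\<^sub>p [:A, 1:]) j"
    proof
      assume a: "int p dvd coeff (g \<circ>\<^sub>p [:A, 1:]) j"
      have "int p dvd coeff (g \<circ>\<^sub>p [:A, 1:]) j - (coeff (g \<circ>\<^sub>p [:A, 1:]) j - coeff (redp p Fz) j)"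
        using a dvdj[of j] by (rule dvd_diff)
      thus False using ncr by simp
    qed
    hence "coeff (g \<circ>\<^sub>p [:A, 1:]) j \<noteq> 0" by auto
    hence "j \<le> degree (g \<circ>\<^sub>p [:A, 1:])" by (rule le_degree)
    hence "j \<le> degree g" using dgq by simp
    thus "degree (poly_red p f) > 2 * B_T" using j_big unfolding g_def by simp
  qed
qed

end
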